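(* Let $\Xi$ be a finite measure on $\Delta$ and consider the $\Xi$-coalescent. This coalescent is symmetric if and only if there exists a measure $F$ on $\mathbb{Z}_+=\{0,1,2,\dots\}$ such that $$F(0)<\infty\quad\text{and}\quad \sum_{k\ge 1}\frac{F(k)}{k}<\infty,$$ and such that $\Xi$ puts no mass outside $\Delta^{sym}$ and $$\Xi(\{\xi^k\})=\frac{F(k)}{k}\ \ (k\in\mathbb{N}),\qquad \Xi(\{\xi^0\})=F(0).$$
   Context: Let $\Delta=\{\zeta=(\zeta_1,\zeta_2,\dots):\zeta_1\ge\zeta_2\ge\dots\ge0,\ \sum_i\zeta_i\le1\}$, $(\zeta,\zeta):=\sum_{i\ge1}\zeta_i^2$ and $\zeta_0:=1-\sum_{i\ge1}\zeta_i$. For a finite measure $\Xi$ on $\Delta$ write $\Xi=a\delta_{(0,0,\dots)}+\Xi^0$ with $a\ge0$ and $\Xi^0(\{(0,0,\dots)\})=0$. The $\Xi$-coalescent is the exchangeable Markov process with values in partitions of $\mathbb{N}$ (its restrictions to $[n]=\{1,\dots,n\}$ are Markov chains) in which, whenever there are $b$ blocks, each particular collision in which $r$ disjoint groups of the current blocks, of sizes $k_1,\dots,k_r\ge2$, merge (each group into a single block) while the remaining $s=b-\sum_ik_i$ blocks stay unchanged, occurs at rate $$\lambda_{b,(k_1,\dots,k_r),s}=a\,\mathbf 1_{\{r=1,k_1=2\}}+\int_\Delta\sum_{l=0}^s\binom{s}{l}\zeta_0^{\,s-l}\sum_{i_1,\dots,i_{r+l}\ \text{distinct}}\zeta_{i_1}^{k_1}\cdots\zeta_{i_r}^{k_r}\zeta_{i_{r+1}}\cdots\zeta_{i_{r+l}}\frac{\Xi^0(d\zeta)}{(\zeta,\zeta)}.$$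 For positive integers $k_1,\dots,k_r$ with $\sum_ik_i=b$ and at least one $k_i\ge2$, write $\lambda_{b,(k_1,\dots,k_r)}:=\lambda_{b,(k_i:\,k_i\ge2),s}$ with $s=\#\{i:k_i=1\}$; this is the rate of a given merger of $b$ blocks into $r$ blocks containing respectively $k_1,\dots,k_r$ of the original blocks (the order of the $k_i$ is irrelevant). A coalescent is called symmetric if for every $b>1$, every $2\le r<b$ and all positive integers $k_1,\dots,k_r$ and $k_1',\dots,k_r'$ with $\sum_ik_i=\sum_ik_i'=b$, one has $\lambda_{b,(k_1,\dots,k_r)}=\lambda_{b,(k_1',\dots,k_r')}$. Let $\xi^0=(0,0,\dots)$, for $k\in\mathbb{N}$ let $\xi^k=(1/k,\dots,1/k,0,0,\dots)$ ($k$ entries equal to $1/k$), and $\Delta^{sym}=\{\xi^k:k\in\mathbb{Z}_+\}$. *)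

theory Defs
  imports "HOL-Probability.Probability"
begin

text \<open>Mass partitions. A point zeta of Delta is a sequence zeta :: nat => real, where
  zeta i (i = 0,1,2,...) stands for the paper's zeta_(i+1).\<close>

definition Delta :: "(nat \<Rightarrow> real) set" where
  "Delta = {\<zeta>. (\<forall>i. 0 \<le> \<zeta> i) \<and> (\<forall>i. \<zeta> (Suc i) \<le> \<zeta> i) \<and> summable \<zeta> \<and> (\<Sum>i. \<zeta> i) \<le> 1}"

definition dust :: "(nat \<Rightarrow> real) \<Rightarrow> real" where
  "dust \<zeta> = 1 - (\<Sum>i. \<zeta> i)"

definition sqnorm :: "(nat \<Rightarrow> real) \<Rightarrow> real" where
  "sqnorm \<zeta> = (\<Sum>i. (\<zeta> i)\<^sup>2)"

definition distinct_sum :: "(nat \<Rightarrow> real) \<Rightarrow> nat list \<Rightarrow> nat \<Rightarrow> ennreal" where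
  "distinct_sum \<zeta> ks l =
     (\<integral>\<^sup>+ is. ennreal ((\<Prod>j<length ks. \<zeta> (is ! j) ^ (ks ! j)) *
                        (\<Prod>j\<in>{length ks..<length ks + l}. \<zeta> (is ! j)))
        \<partial>count_space {is. length is = length ks + l \<and> distinct is})"

text \<open>The rate lambda_(b,(k_1,...,k_r),s) with b = k_1+...+k_r+s, where ks = [k_1,...,k_r]
  (all k_i >= 2) and Xi is a finite measure on Delta (a measure on nat => real carried by Delta).
  a = Xi({0}) and Xi^0 = restriction of Xi to the complement of {0}.\<close>
definition rate :: "(nat \<Rightarrow> real) measure \<Rightarrow> nat list \<Rightarrow> nat \<Rightarrow> ennreal" where
  "rate \<Xi> ks s =
     emeasure \<Xi> {(\<lambda>_. 0)} * (if ks = [2] then 1 else 0) +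
     (\<integral>\<^sup>+ \<zeta> \<in> (UNIV - {(\<lambda>_. 0)}).
        (\<Sum>l\<le>s. ennreal (real (s choose l) * dust \<zeta> ^ (s - l)) * distinct_sum \<zeta> ks l)
          / ennreal (sqnorm \<zeta>) \<partial>\<Xi>)"

text \<open>lambda_(b,(k_1,...,k_r)) for positive k_i: the blocks of size >= 2 form the merging
  groups, s = number of k_i equal to 1.\<close>
definition merger_rate :: "(nat \<Rightarrow> real) measure \<Rightarrow> nat list \<Rightarrow> ennreal" where
  "merger_rate \<Xi> ks = rate \<Xi> (filter (\<lambda>k. 2 \<le> k) ks) (length (filter (\<lambda>k. k = 1) ks))"

definition symmetric_coalescent :: "(nat \<Rightarrow> real) measure \<Rightarrow> bool" where
  "symmetric_coalescent \<Xi> \<longleftrightarrow>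
     (\<forall>b r ks ks'. 1 < b \<longrightarrow> 2 \<le> r \<longrightarrow> r < b \<longrightarrow>
        length ks = r \<longrightarrow> length ks' = r \<longrightarrow>
        (\<forall>k\<in>set ks. 0 < k) \<longrightarrow> (\<forall>k\<in>set ks'. 0 < k) \<longrightarrow>
        sum_list ks = b \<longrightarrow> sum_list ks' = b \<longrightarrow>
        merger_rate \<Xi> ks = merger_rate \<Xi> ks')"

definition xi :: "nat \<Rightarrow> nat \<Rightarrow> real" where
  "xi k = (\<lambda>i. if i < k then 1 / real k else 0)"

definition Delta_sym :: "(nat \<Rightarrow> real) set" where
  "Delta_sym = range xi"

end

theory Submission imports Defs begin

lemma term_le_suminf:
  fixes f :: "nat \<Rightarrow> real"
  assumes "summable f" "\<And>i. 0 \<le> f i"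
  shows "f n \<le> suminf f"
  using sum_le_suminf[OF assms(1), of "{n}"] assms(2) by simp

lemma inner_sum:
  fixes h :: "nat \<Rightarrow> real"
  assumes "\<And>i. 0 \<le> h i" "0 \<le> c" "summable h"
  shows "(\<Sum>j. ennreal (c * h j) * indicator {(i,j). i \<noteq> j} (i0, j)) = ennreal (c * (suminf h - h i0))"
proof -
  have eq: "(\<lambda>j. ennreal (c * h j) * indicator {(i,j). i \<noteq> j} (i0, j)) = (\<lambda>j. ennreal (c * h j - (if j = i0 then c * h j else 0)))"
    by (auto simp: indicator_def)
  have s1: "summable (\<lambda>j. c * h j)" using assms by (intro summable_mult) 
  have s2: "(\<lambda>j. if j = i0 then c * h j else 0) sums (c * h i0)" by (rule sums_single)
  have A: "(\<Sum>j. c * h j - (if j = i0 then c * h j else 0)) = c * suminf h - c * h i0"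
    using suminf_diff[OF s1 sums_summable[OF s2]] sums_unique[OF s2] suminf_mult[OF assms(3)] by simp
  have B: "summable (\<lambda>j. c * h j - (if j = i0 then c * h j else 0))"
    using s1 sums_summable[OF s2] by (rule summable_diff)
  have C: "\<And>j. 0 \<le> c * h j - (if j = i0 then c * h j else 0)" using assms by auto
  show ?thesis unfolding eq suminf_ennreal2[OF C B] A by (simp add: algebra_simps)
qed

lemma pair_sum:
  fixes g h :: "nat \<Rightarrow> real"
  assumes g0: "\<And>i. 0 \<le> g i" and h0: "\<And>i. 0 \<le> h i" and h1: "\<And>i. h i \<le> 1"
    and sg: "summable g" and sh: "summable h"
  shows "(\<integral>\<^sup>+ is. ennreal (g (is!0) * h (is!1)) \<partial>count_space {is. length is = 2 \<and> distinct is})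
        = ennreal (suminf g * suminf h - (\<Sum>i. g i * h i))"
proof -
  let ?D = "{(i::nat,j). i \<noteq> j}"
  have bij: "bij_betw (\<lambda>(i,j). [i,j]) ?D {is. length is = 2 \<and> distinct is}"
    by (rule bij_betwI[where g = "\<lambda>is. (is!0, is!1)"]) (auto simp: length_Suc_conv numeral_2_eq_2)
  have "(\<integral>\<^sup>+ is. ennreal (g (is!0) * h (is!1)) \<partial>count_space {is. length is = 2 \<and> distinct is})
     = (\<integral>\<^sup>+ p. ennreal (g (fst p) * h (snd p)) \<partial>count_space ?D)"
    by (subst nn_integral_bij_count_space[OF bij, symmetric]) (auto intro!: nn_integral_cong)
  also have "\<dots> = (\<integral>\<^sup>+ p. ennreal (g (fst p) * h (snd p)) * indicator ?D p \<partial>count_space UNIV)"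
    by (rule nn_integral_count_space_indicator) simp
  also have "\<dots> = (\<integral>\<^sup>+ x. \<integral>\<^sup>+ y. ennreal (g x * h y) * indicator ?D (x,y) \<partial>count_space UNIV \<partial>count_space UNIV)"
    by (subst nn_integral_fst_count_space[symmetric]) simp
  also have "\<dots> = (\<Sum>x. ennreal (g x * (suminf h - h x)))"
    by (simp add: nn_integral_count_space_nat inner_sum h0 g0 sh)
  also have "\<dots> = ennreal (\<Sum>x. g x * suminf h - g x * h x)"
  proof -
    have s: "summable (\<lambda>x. g x * h x)"
      by (rule summable_comparison_test'[OF sg]) (use g0 h0 h1 in \<open>auto intro: mult_left_le\<close>)
    have le: "\<And>x. h x \<le> suminf h" using sh h0 by (rule term_le_suminf) 
    show ?thesis
      by (subst suminf_ennreal2[symmetric]) 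
        (auto simp: g0 le right_diff_distrib intro!: summable_diff summable_mult2 sg s mult_left_mono)
  qed
  also have "\<dots> = ennreal (suminf g * suminf h - (\<Sum>i. g i * h i))"
  proof -
    have s: "summable (\<lambda>x. g x * h x)"
      by (rule summable_comparison_test'[OF sg]) (use g0 h0 h1 in \<open>auto intro: mult_left_le\<close>)
    show ?thesis using suminf_diff[OF summable_mult2[OF sg] s] suminf_mult2[OF sg] by simp
  qed
  finally show ?thesis .
qed
lemma single_sum:
  fixes g :: "nat \<Rightarrow> real"
  assumes g0: "\<And>i. 0 \<le> g i" and sg: "summable g"
  shows "(\<integral>\<^sup>+ is. ennreal (g (is!0)) \<partial>count_space {is. length is = 1 \<and> distinct is})
        = ennreal (suminf g)"
proof -
  have bij: "bij_betw (\<lambda>i. [i]) UNIV {is. length is = 1 \<and> distinct is}"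
    by (rule bij_betwI[where g = "\<lambda>is. is!0"]) (auto simp: length_Suc_conv)
  have "(\<integral>\<^sup>+ is. ennreal (g (is!0)) \<partial>count_space {is. length is = 1 \<and> distinct is})
     = (\<integral>\<^sup>+ i. ennreal (g i) \<partial>count_space UNIV)"
    by (subst nn_integral_bij_count_space[OF bij, symmetric]) simp
  also have "\<dots> = ennreal (suminf g)"
    by (simp add: nn_integral_count_space_nat suminf_ennreal2 g0 sg)
  finally show ?thesis .
qed

lemma Delta_D:
  assumes "\<zeta> \<in> Delta"
  shows "\<And>i. 0 \<le> \<zeta> i" "\<And>i. \<zeta> (Suc i) \<le> \<zeta> i" "summable \<zeta>" "suminf \<zeta> \<le> 1"
    "\<And>i. \<zeta> i \<le> 1" "\<And>n. 0 < n \<Longrightarrow> summable (\<lambda>i. \<zeta> i ^ n)"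
proof -
  show z0: "\<And>i. 0 \<le> \<zeta> i" "\<And>i. \<zeta> (Suc i) \<le> \<zeta> i" and s: "summable \<zeta>" and s1: "suminf \<zeta> \<le> 1"
    using assms by (auto simp: Delta_def)
  show z1: "\<And>i. \<zeta> i \<le> 1" using term_le_suminf[OF s z0(1)] s1 by (meson order_trans)
  fix n :: nat assume "0 < n"
  show "summable (\<lambda>i. \<zeta> i ^ n)"
  proof (rule summable_comparison_test'[OF s])
    fix i :: nat
    have "\<zeta> i ^ n = \<zeta> i * \<zeta> i ^ (n - 1)" using \<open>0<n\<close> by (simp add: power_eq_if)
    also have "\<dots> \<le> \<zeta> i * 1" by (intro mult_left_mono power_le_one) (use z0 z1 in auto)
    finally show "norm (\<zeta> i ^ n) \<le> \<zeta> i" using z0[of i] by simp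
  qed
qed

lemma sqnorm_pos:
  assumes "\<zeta> \<in> Delta" "\<zeta> \<noteq> (\<lambda>_. 0)"
  shows "0 < (\<Sum>i. (\<zeta> i)^2)"
proof -
  obtain j where j: "\<zeta> j \<noteq> 0" using assms(2) by auto
  have "0 < (\<zeta> j)^2" using j by simp
  also have "\<dots> \<le> (\<Sum>i. (\<zeta> i)^2)"
    by (rule term_le_suminf[OF Delta_D(6)[OF assms(1)]]) auto
  finally show ?thesis .
qed

lemma cs_expand:
  assumes "\<zeta> \<in> Delta"
  defines "q \<equiv> (\<Sum>i. (\<zeta> i)^2)"
  shows "(\<lambda>i. \<zeta> i * (\<zeta> i - q)^2) sums ((\<Sum>i. \<zeta> i ^ 3) - 2*q*q + q^2 * suminf \<zeta>)"
proof -
  have a: "(\<lambda>i. \<zeta> i ^ 3) sums (\<Sum>i. \<zeta> i ^ 3)" using Delta_D(6)[OF assms(1), of 3] by (simp add: summable_sums)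
  have b: "(\<lambda>i. 2*q*(\<zeta> i)^2) sums (2*q*q)" unfolding q_def
    using Delta_D(6)[OF assms(1), of 2] by (intro sums_mult summable_sums) simp
  have c: "(\<lambda>i. q^2 * \<zeta> i) sums (q^2 * suminf \<zeta>)"
    using Delta_D(3)[OF assms(1)] by (intro sums_mult summable_sums)
  have "(\<lambda>i. \<zeta> i ^ 3 - 2*q*(\<zeta> i)^2 + q^2 * \<zeta> i) sums ((\<Sum>i. \<zeta> i ^ 3) - 2*q*q + q^2 * suminf \<zeta>)"
    by (intro sums_add sums_diff a b c)
  moreover have "(\<lambda>i. \<zeta> i ^ 3 - 2*q*(\<zeta> i)^2 + q^2 * \<zeta> i) = (\<lambda>i. \<zeta> i * (\<zeta> i - q)^2)"
    by (rule ext) (simp add: power2_eq_square power3_eq_cube algebra_simps)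
  ultimately show ?thesis by simp
qed

lemma cs_ge:
  assumes "\<zeta> \<in> Delta"
  shows "(\<Sum>i. (\<zeta> i)^2)^2 \<le> (\<Sum>i. \<zeta> i ^ 3)"
proof -
  define q where "q = (\<Sum>i. (\<zeta> i)^2)"
  have s: "(\<lambda>i. \<zeta> i * (\<zeta> i - q)^2) sums ((\<Sum>i. \<zeta> i ^ 3) - 2*q*q + q^2 * suminf \<zeta>)"
    using cs_expand[OF assms] unfolding q_def .
  have "0 \<le> (\<Sum>i. \<zeta> i ^ 3) - 2*q*q + q^2 * suminf \<zeta>"
    using sums_le[OF _ sums_zero s] Delta_D(1)[OF assms] by auto
  moreover have "q^2 * suminf \<zeta> \<le> q^2" using Delta_D(4)[OF assms]
    by (simp add: mult_left_le)
  ultimately show ?thesis unfolding q_def by (simp add: power2_eq_square)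
qed

lemma cs_eq:
  assumes "\<zeta> \<in> Delta" "\<zeta> \<noteq> (\<lambda>_. 0)" "(\<Sum>i. \<zeta> i ^ 3) \<le> (\<Sum>i. (\<zeta> i)^2)^2"
  shows "\<zeta> \<in> Delta_sym"
proof -
  define q where "q = (\<Sum>i. (\<zeta> i)^2)"
  have q0: "0 < q" unfolding q_def by (rule sqnorm_pos[OF assms(1,2)])
  note D = Delta_D[OF assms(1)]
  have s: "(\<lambda>i. \<zeta> i * (\<zeta> i - q)^2) sums ((\<Sum>i. \<zeta> i ^ 3) - 2*q*q + q^2 * suminf \<zeta>)"
    using cs_expand[OF assms(1)] unfolding q_def .
  have T0: "0 \<le> (\<Sum>i. \<zeta> i ^ 3) - 2*q*q + q^2 * suminf \<zeta>"
    using sums_le[OF _ sums_zero s] D(1) by auto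
  have "q^2 * suminf \<zeta> \<le> q^2" using D(4) by (simp add: mult_left_le)
  hence T: "(\<Sum>i. \<zeta> i ^ 3) - 2*q*q + q^2 * suminf \<zeta> = 0" using T0 assms(3) unfolding q_def[symmetric]
    by (simp add: power2_eq_square)
  hence "q^2 * 1 \<le> q^2 * suminf \<zeta>" using assms(3) unfolding q_def[symmetric]
    by (simp add: power2_eq_square)
  hence S1: "suminf \<zeta> = 1" using D(4) q0 by (simp add: mult_le_cancel_left)
  have "suminf (\<lambda>i. \<zeta> i * (\<zeta> i - q)^2) = 0" using s T sums_unique by metis
  hence "\<forall>i. \<zeta> i * (\<zeta> i - q)^2 = 0"
    using suminf_eq_zero_iff[OF sums_summable[OF s]] D(1) by auto
  hence vals: "\<And>i. \<zeta> i = 0 \<or> \<zeta> i = q" by auto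
  have dec: "decseq \<zeta>" using D(2) by (intro decseq_SucI) 
  have "\<zeta> \<longlonglongrightarrow> 0" using D(3) by (rule summable_LIMSEQ_zero)
  then have "eventually (\<lambda>i. \<zeta> i < q) sequentially" using q0 by (rule order_tendstoD(2))
  then obtain N where "\<zeta> N < q" unfolding eventually_sequentially by auto
  hence ex: "\<exists>i. \<zeta> i = 0" using vals by force
  define k where "k = (LEAST i. \<zeta> i = 0)"
  have zk: "\<zeta> k = 0" unfolding k_def by (rule LeastI_ex[OF ex])
  have lt: "\<zeta> i = q" if "i < k" for i
  proof -
    have "\<zeta> i \<noteq> 0" using not_less_Least[OF that[unfolded k_def]] .
    thus ?thesis using vals[of i] by simp
  qed
  have ge: "\<zeta> i = 0" if "k \<le> i" for i
    using decseqD[OF dec that] zk D(1)[of i] by linarith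
  have "suminf \<zeta> = (\<Sum>i<k. \<zeta> i)"
    by (rule suminf_finite) (auto simp: ge)
  also have "\<dots> = k * q" using lt by simp
  finally have kq: "real k * q = 1" using S1 by simp
  hence kpos: "0 < k" by (cases k) auto
  have "\<zeta> = xi k"
    unfolding xi_def using kq lt ge kpos by (auto simp: fun_eq_iff field_simps not_less)
  thus ?thesis unfolding Delta_sym_def by auto
qed

lemma meas_coord[measurable]: "(\<lambda>\<zeta>::nat\<Rightarrow>real. \<zeta> i) \<in> borel_measurable borel"
  by (intro borel_measurable_continuous_onI continuous_on_product_coordinates)

lemma singleton_borel[measurable]: "{x::nat\<Rightarrow>real} \<in> sets borel"
  by (rule borel_closed) (rule closed_singleton)

lemma Delta_eq: "Delta = {\<zeta>. (\<forall>i. 0 \<le> \<zeta> i) \<and> (\<forall>i. \<zeta> (Suc i) \<le> \<zeta> i) \<and> (\<forall>n. (\<Sum>i<n. \<zeta> i) \<le> 1)}"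
proof safe
  fix \<zeta> assume z: "\<zeta> \<in> Delta"
  show "0 \<le> \<zeta> i" "\<zeta> (Suc i) \<le> \<zeta> i" for i using Delta_D[OF z] by auto
  show "(\<Sum>i<n. \<zeta> i) \<le> 1" for n
    using sum_le_suminf[OF Delta_D(3)[OF z], of "{..<n}"] Delta_D(1,4)[OF z] by (meson finite_lessThan order_trans)
next
  fix \<zeta> :: "nat \<Rightarrow> real" assume a: "\<forall>i. 0 \<le> \<zeta> i" "\<forall>i. \<zeta> (Suc i) \<le> \<zeta> i" "\<forall>n. (\<Sum>i<n. \<zeta> i) \<le> 1"
  have s: "summable \<zeta>" using a by (intro summableI_nonneg_bounded[where x=1]) auto
  show "\<zeta> \<in> Delta" unfolding Delta_def using a s by (auto intro: suminf_le_const)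
qed

lemma Delta_closed: "closed Delta"
  unfolding Delta_eq
  by (intro closed_Collect_conj closed_Collect_all closed_Collect_le continuous_on_sum
      continuous_on_product_coordinates continuous_on_const)

lemma Delta_borel[measurable]: "Delta \<in> sets borel"
  by (rule borel_closed[OF Delta_closed])

lemma Delta_sym_borel[measurable]: "Delta_sym \<in> sets borel"
  unfolding Delta_sym_def by (rule sets.countable) (rule singleton_borel, simp)

lemma ds30: assumes "\<zeta> \<in> Delta"
  shows "distinct_sum \<zeta> [3] 0 = ennreal (\<Sum>i. \<zeta> i ^ 3)"
  unfolding distinct_sum_def using single_sum[of "\<lambda>i. \<zeta> i ^ 3"] Delta_D[OF assms] by simp

lemma ds31: assumes "\<zeta> \<in> Delta"
  shows "distinct_sum \<zeta> [3] 1 = ennreal ((\<Sum>i. \<zeta> i ^ 3) * suminf \<zeta> - (\<Sum>i. \<zeta> i ^ 4))"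
proof -
  have "distinct_sum \<zeta> [3] 1 = (\<integral>\<^sup>+ is. ennreal (\<zeta> (is!0) ^ 3 * \<zeta> (is!1)) \<partial>count_space {is. length is = 2 \<and> distinct is})"
    unfolding distinct_sum_def by (simp add: numeral_2_eq_2)
  also have "\<dots> = ennreal ((\<Sum>i. \<zeta> i ^ 3) * suminf \<zeta> - (\<Sum>i. \<zeta> i ^ 3 * \<zeta> i))"
    by (rule pair_sum) (use Delta_D[OF assms] in auto)
  also have "(\<lambda>i. \<zeta> i ^ 3 * \<zeta> i) = (\<lambda>i. \<zeta> i ^ 4)" by (simp add: fun_eq_iff power_Suc2[symmetric] numeral_eq_Suc)
  finally show ?thesis .
qed

lemma ds22: assumes "\<zeta> \<in> Delta"
  shows "distinct_sum \<zeta> [2,2] 0 = ennreal ((\<Sum>i. \<zeta> i ^ 2) * (\<Sum>i. \<zeta> i ^ 2) - (\<Sum>i. \<zeta> i ^ 4))"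
proof -
  have "distinct_sum \<zeta> [2,2] 0 = (\<integral>\<^sup>+ is. ennreal (\<zeta> (is!0) ^ 2 * \<zeta> (is!1) ^ 2) \<partial>count_space {is. length is = 2 \<and> distinct is})"
    unfolding distinct_sum_def by (simp add: numeral_2_eq_2 lessThan_Suc mult_ac)
  also have "\<dots> = ennreal ((\<Sum>i. \<zeta> i ^ 2) * (\<Sum>i. \<zeta> i ^ 2) - (\<Sum>i. \<zeta> i ^ 2 * \<zeta> i ^ 2))"
    by (rule pair_sum) (use Delta_D[OF assms] in \<open>auto simp: power_le_one\<close>)
  also have "(\<lambda>i. \<zeta> i ^ 2 * \<zeta> i ^ 2) = (\<lambda>i. \<zeta> i ^ 4)" by (simp add: fun_eq_iff power_add[symmetric])
  finally show ?thesis .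
qed

definition mP :: "nat \<Rightarrow> (nat \<Rightarrow> real) \<Rightarrow> real" where
  "mP n \<zeta> = enn2real (\<Sum>i. ennreal (\<zeta> i ^ n))"

lemma mP_meas[measurable]: "mP n \<in> borel_measurable borel"
  unfolding mP_def by measurable

lemma mP_Delta: "\<zeta> \<in> Delta \<Longrightarrow> 0 < n \<Longrightarrow> mP n \<zeta> = (\<Sum>i. \<zeta> i ^ n)"
  unfolding mP_def using Delta_D by (simp add: suminf_ennreal2 suminf_nonneg)

definition bf :: "(nat \<Rightarrow> real) \<Rightarrow> real" where
  "bf \<zeta> = (mP 2 \<zeta> * mP 2 \<zeta> - mP 4 \<zeta>) / mP 2 \<zeta>"
definition cf :: "(nat \<Rightarrow> real) \<Rightarrow> real" where
  "cf \<zeta> = (mP 3 \<zeta> - mP 2 \<zeta> * mP 2 \<zeta>) / mP 2 \<zeta>"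

lemma bf_meas[measurable]: "bf \<in> borel_measurable borel" unfolding bf_def by measurable
lemma cf_meas[measurable]: "cf \<in> borel_measurable borel" unfolding cf_def by measurable

lemma moments:
  assumes z: "\<zeta> \<in> Delta"
  shows "(\<Sum>i. \<zeta> i ^ 4) \<le> (\<Sum>i. \<zeta> i ^ 3) * suminf \<zeta>"
    "(\<Sum>i. \<zeta> i ^ 4) \<le> (\<Sum>i. \<zeta> i ^ 2) * (\<Sum>i. \<zeta> i ^ 2)"
    "(\<Sum>i. \<zeta> i ^ 2) \<le> 1"
proof -
  note D = Delta_D[OF z]
  have "(\<Sum>i. \<zeta> i ^ 4) \<le> (\<Sum>i. \<zeta> i ^ 3 * suminf \<zeta>)"
  proof (rule suminf_le)
    show "\<zeta> n ^ 4 \<le> \<zeta> n ^ 3 * suminf \<zeta>" for n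
    proof -
      have "\<zeta> n ^ 4 = \<zeta> n ^ 3 * \<zeta> n" by (simp add: numeral_eq_Suc)
      also have "\<dots> \<le> \<zeta> n ^ 3 * suminf \<zeta>" using D(1) term_le_suminf[OF D(3) D(1)] by (intro mult_left_mono) auto
      finally show ?thesis .
    qed
  qed (use D(6) summable_mult2[OF D(6)[of 3]] in auto)
  thus "(\<Sum>i. \<zeta> i ^ 4) \<le> (\<Sum>i. \<zeta> i ^ 3) * suminf \<zeta>" using suminf_mult2[OF D(6)[of 3]] by simp
  have s2: "summable (\<lambda>i. \<zeta> i ^ 2)" using D(6) by simp
  have "(\<Sum>i. \<zeta> i ^ 4) \<le> (\<Sum>i. \<zeta> i ^ 2 * (\<Sum>i. \<zeta> i ^ 2))"
  proof (rule suminf_le)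
    show "\<zeta> n ^ 4 \<le> \<zeta> n ^ 2 * (\<Sum>i. \<zeta> i ^ 2)" for n
    proof -
      have "\<zeta> n ^ 4 = \<zeta> n ^ 2 * \<zeta> n ^ 2" by (simp add: power_add[symmetric])
      also have "\<dots> \<le> \<zeta> n ^ 2 * (\<Sum>i. \<zeta> i ^ 2)" using term_le_suminf[OF s2, of n] by (intro mult_left_mono) auto
      finally show ?thesis .
    qed
  qed (use D(6) summable_mult2[OF s2] in auto)
  thus "(\<Sum>i. \<zeta> i ^ 4) \<le> (\<Sum>i. \<zeta> i ^ 2) * (\<Sum>i. \<zeta> i ^ 2)" using suminf_mult2[OF s2] by simp
  have "(\<Sum>i. \<zeta> i ^ 2) \<le> suminf \<zeta>"
    by (rule suminf_le) (use D s2 in \<open>auto simp: power2_eq_square intro: mult_left_le\<close>)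
  thus "(\<Sum>i. \<zeta> i ^ 2) \<le> 1" using D(4) by simp
qed

lemma IA_eq:
  assumes z: "\<zeta> \<in> Delta" and nz: "\<zeta> \<noteq> (\<lambda>_. 0)"
  shows "(\<Sum>l\<le>1. ennreal (real (1 choose l) * dust \<zeta> ^ (1 - l)) * distinct_sum \<zeta> [3] l) / ennreal (sqnorm \<zeta>)
     = ennreal (bf \<zeta>) + ennreal (cf \<zeta>)"
proof -
  note D = Delta_D[OF z]
  define S where "S = suminf \<zeta>"
  define q where "q = (\<Sum>i. \<zeta> i ^ 2)"
  define P3 where "P3 = (\<Sum>i. \<zeta> i ^ 3)"
  define P4 where "P4 = (\<Sum>i. \<zeta> i ^ 4)"
  have q0: "0 < q" unfolding q_def using sqnorm_pos[OF z nz] by simp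
  have m: "P4 \<le> P3 * S" "P4 \<le> q * q" "q\<^sup>2 \<le> P3" "S \<le> 1"
    using moments[OF z] cs_ge[OF z] D(4) unfolding S_def q_def P3_def P4_def by auto
  have P30: "0 \<le> P3" unfolding P3_def using D by (intro suminf_nonneg) auto
  have PS: "P3 * S \<le> P3" using m(4) P30 by (rule mult_left_le)
  have "(\<Sum>l\<le>1. ennreal (real (1 choose l) * dust \<zeta> ^ (1 - l)) * distinct_sum \<zeta> [3] l)
     = ennreal ((1 - S) * P3) + ennreal (P3 * S - P4)"
    using ds30[OF z] ds31[OF z] unfolding dust_def S_def P3_def P4_def
    using P30[unfolded P3_def] D(4) by (simp add: ennreal_mult[symmetric])
  also have "ennreal ((1 - S) * P3) + ennreal (P3 * S - P4) = ennreal (P3 - P4)" using m P30 PS by (subst ennreal_plus[symmetric]) (auto simp: algebra_simps)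
  finally have num: "(\<Sum>l\<le>1. ennreal (real (1 choose l) * dust \<zeta> ^ (1 - l)) * distinct_sum \<zeta> [3] l) = ennreal (P3 - P4)" .
  have sq: "sqnorm \<zeta> = q" unfolding sqnorm_def q_def by simp
  have bfe: "bf \<zeta> = (q*q - P4)/q" and cfe: "cf \<zeta> = (P3 - q*q)/q"
    unfolding bf_def cf_def using mP_Delta[OF z] unfolding q_def P3_def P4_def by auto
  have "ennreal (P3 - P4) / ennreal q = ennreal ((P3 - P4)/q)"
    using m q0 by (intro divide_ennreal) (auto simp: power2_eq_square)
  also have "\<dots> = ennreal (bf \<zeta> + cf \<zeta>)" unfolding bfe cfe by (simp add: diff_divide_distrib)
  also have "\<dots> = ennreal (bf \<zeta>) + ennreal (cf \<zeta>)"
    unfolding bfe cfe using m q0 by (intro ennreal_plus) (auto simp: power2_eq_square)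
  finally show ?thesis unfolding num sq .
qed

lemma IB_eq:
  assumes z: "\<zeta> \<in> Delta" and nz: "\<zeta> \<noteq> (\<lambda>_. 0)"
  shows "(\<Sum>l\<le>0. ennreal (real (0 choose l) * dust \<zeta> ^ (0 - l)) * distinct_sum \<zeta> [2,2] l) / ennreal (sqnorm \<zeta>)
     = ennreal (bf \<zeta>)" and "bf \<zeta> \<le> 1"
proof -
  note D = Delta_D[OF z]
  define q where "q = (\<Sum>i. \<zeta> i ^ 2)"
  define P4 where "P4 = (\<Sum>i. \<zeta> i ^ 4)"
  have q0: "0 < q" unfolding q_def using sqnorm_pos[OF z nz] by simp
  have m: "P4 \<le> q * q" "q \<le> 1" using moments[OF z] unfolding q_def P4_def by auto
  have P40: "0 \<le> P4" unfolding P4_def using D by (intro suminf_nonneg) auto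
  have sq: "sqnorm \<zeta> = q" unfolding sqnorm_def q_def by simp
  have bfe: "bf \<zeta> = (q*q - P4)/q"
    unfolding bf_def using mP_Delta[OF z] unfolding q_def P4_def by auto
  show "(\<Sum>l\<le>0. ennreal (real (0 choose l) * dust \<zeta> ^ (0 - l)) * distinct_sum \<zeta> [2,2] l) / ennreal (sqnorm \<zeta>)
     = ennreal (bf \<zeta>)"
    unfolding sq bfe using ds22[OF z] m q0 unfolding q_def[symmetric] P4_def[symmetric]
    by (simp add: divide_ennreal)
  have "(q*q - P4)/q \<le> (q*q)/q" using q0 P40 by (intro divide_right_mono) auto
  moreover have "q * q \<le> q" using m q0 by (simp add: mult_left_le)
  moreover have "(q*q)/q = q" using q0 by simp
  ultimately have "(q*q - P4)/q \<le> 1" using m by linarith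
  thus "bf \<zeta> \<le> 1" unfolding bfe .
qed

lemma filt_props:
  assumes "\<forall>k\<in>set ks. 0 < (k::nat)"
  shows "sum_list (filter (\<lambda>k. 2 \<le> k) ks) + length (filter (\<lambda>k. k = 1) ks) = sum_list ks"
    "length (filter (\<lambda>k. 2 \<le> k) ks) + length (filter (\<lambda>k. k = 1) ks) = length ks"
  using assms by (induction ks) auto

lemma sum_list_ge2: "\<forall>k\<in>set fk. 2 \<le> (k::nat) \<Longrightarrow> 2 * length fk \<le> sum_list fk"
  by (induction fk) auto

lemma two_iff:
  assumes "\<forall>k\<in>set fk. 2 \<le> (k::nat)"
  shows "fk = [2] \<longleftrightarrow> sum_list fk = length fk + 1"
proof (cases fk)
  case Nil thus ?thesis by simp
next
  case (Cons x r)
  show ?thesis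
  proof (cases r)
    case Nil thus ?thesis using Cons by (auto simp: numeral_2_eq_2)
  next
    case (Cons y r')
    have "2 * length r' \<le> sum_list r'" using assms \<open>fk = x # r\<close> Cons by (intro sum_list_ge2) auto
    moreover have "2 \<le> x" "2 \<le> y" using assms \<open>fk = x # r\<close> Cons by auto
    ultimately show ?thesis using \<open>fk = x # r\<close> Cons by auto
  qed
qed

lemma suminf_xi: "0 < k \<Longrightarrow> suminf (xi k) = 1"
proof -
  assume k: "0 < k"
  have "suminf (xi k) = (\<Sum>i<k. xi k i)" by (rule suminf_finite) (auto simp: xi_def)
  also have "\<dots> = 1" using k by (simp add: xi_def)
  finally show ?thesis .
qed

lemma sqnorm_xi: "0 < k \<Longrightarrow> sqnorm (xi k) = 1 / real k"
proof -
  assume k: "0 < k"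
  have "sqnorm (xi k) = (\<Sum>i<k. (xi k i)^2)" unfolding sqnorm_def by (rule suminf_finite) (auto simp: xi_def)
  also have "\<dots> = 1 / real k" using k by (simp add: xi_def power2_eq_square)
  finally show ?thesis .
qed

definition Tset :: "nat \<Rightarrow> nat \<Rightarrow> nat list set" where
  "Tset n k = {is. length is = n \<and> distinct is \<and> set is \<subseteq> {..<k}}"

lemma ds_xi:
  assumes k: "0 < k" and pos: "\<forall>x\<in>set ks. 0 < x"
  shows "distinct_sum (xi k) ks l = ennreal ((1 / real k) ^ (sum_list ks + l)) * of_nat (card (Tset (length ks + l) k))"
proof -
  let ?X = "{is. length is = length ks + l \<and> distinct is}"
  let ?c = "(1 / real k) ^ (sum_list ks + l)"
  have fin: "finite (Tset (length ks + l) k)"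
    unfolding Tset_def by (rule finite_subset[OF _ finite_lists_length_eq[of "{..<k}" "length ks + l"]]) auto
  have eq: "ennreal ((\<Prod>j<length ks. xi k (is ! j) ^ (ks ! j)) * (\<Prod>j\<in>{length ks..<length ks + l}. xi k (is ! j)))
      = ennreal ?c * indicator (Tset (length ks + l) k) is" if "is \<in> ?X" for "is"
  proof (cases "set is \<subseteq> {..<k}")
    case True
    have inK: "\<And>j. j < length is \<Longrightarrow> is ! j < k" using True by (auto dest: nth_mem)
    have "(\<Prod>j<length ks. xi k (is ! j) ^ (ks ! j)) = (\<Prod>j<length ks. (1 / real k) ^ (ks ! j))"
      using inK that by (intro prod.cong) (auto simp: xi_def)
    also have "\<dots> = (1 / real k) ^ (\<Sum>j<length ks. ks ! j)" by (simp add: power_sum)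
    also have "(\<Sum>j<length ks. ks ! j) = sum_list ks" by (simp add: sum_list_sum_nth atLeast0LessThan)
    finally have p1: "(\<Prod>j<length ks. xi k (is ! j) ^ (ks ! j)) = (1 / real k) ^ sum_list ks" .
    have "(\<Prod>j\<in>{length ks..<length ks + l}. xi k (is ! j)) = (\<Prod>j\<in>{length ks..<length ks + l}. 1 / real k)"
      using inK that by (intro prod.cong) (auto simp: xi_def)
    also have "\<dots> = (1 / real k) ^ l" by simp
    finally have p2: "(\<Prod>j\<in>{length ks..<length ks + l}. xi k (is ! j)) = (1 / real k) ^ l" .
    show ?thesis using True that unfolding p1 p2 by (simp add: Tset_def power_add)
  next
    case False
    then obtain x where "x \<in> set is" "\<not> x < k" by auto
    then obtain j where j: "j < length is" "k \<le> is ! j" by (auto simp: in_set_conv_nth not_less)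
    have z: "(\<Prod>j<length ks. xi k (is ! j) ^ (ks ! j)) * (\<Prod>j\<in>{length ks..<length ks + l}. xi k (is ! j)) = 0"
    proof (cases "j < length ks")
      case True
      have "0 < ks ! j" using pos True by auto
      hence "xi k (is ! j) ^ (ks ! j) = 0" using j by (simp add: xi_def)
      hence "(\<Prod>j<length ks. xi k (is ! j) ^ (ks ! j)) = 0" using True by (intro prod_zero) auto
      thus ?thesis by simp
    next
      case False
      hence "(\<Prod>j\<in>{length ks..<length ks + l}. xi k (is ! j)) = 0" using j that
        by (intro prod_zero) (auto simp: xi_def intro!: bexI[of _ j])
      thus ?thesis by simp
    qed
    show ?thesis unfolding z using False by (simp add: Tset_def)
  qed
  have "distinct_sum (xi k) ks l = (\<integral>\<^sup>+ is. ennreal ?c * indicator (Tset (length ks + l) k) is \<partial>count_space ?X)"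
    unfolding distinct_sum_def by (intro nn_integral_cong) (simp add: eq)
  also have "\<dots> = ennreal ?c * emeasure (count_space ?X) (Tset (length ks + l) k)"
    by (rule nn_integral_cmult_indicator) (auto simp: Tset_def)
  also have "\<dots> = ennreal ?c * of_nat (card (Tset (length ks + l) k))"
    using fin by (subst emeasure_count_space_finite) (auto simp: Tset_def)
  finally show ?thesis .
qed

definition Ig :: "nat list \<Rightarrow> nat \<Rightarrow> (nat \<Rightarrow> real) \<Rightarrow> ennreal" where
  "Ig ks s \<zeta> = (\<Sum>l\<le>s. ennreal (real (s choose l) * dust \<zeta> ^ (s - l)) * distinct_sum \<zeta> ks l) / ennreal (sqnorm \<zeta>)"

lemma Ig_xi:
  assumes k: "0 < k" and pos: "\<forall>x\<in>set ks. 0 < x"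
  shows "Ig ks s (xi k) = ennreal ((1 / real k) ^ (sum_list ks + s)) * of_nat (card (Tset (length ks + s) k)) / ennreal (1 / real k)"
proof -
  have d: "dust (xi k) = 0" using suminf_xi[OF k] by (simp add: dust_def)
  have "(\<Sum>l\<le>s. ennreal (real (s choose l) * dust (xi k) ^ (s - l)) * distinct_sum (xi k) ks l)
      = ennreal (real (s choose s) * dust (xi k) ^ (s - s)) * distinct_sum (xi k) ks s"
    by (subst sum.remove[of _ s]) (auto simp: d intro!: sum.neutral)
  thus ?thesis unfolding Ig_def by (simp add: ds_xi[OF k pos] sqnorm_xi[OF k])
qed


lemma rate_Ig: "rate \<Xi> ks s = emeasure \<Xi> {\<lambda>_. 0} * (if ks = [2] then 1 else 0) + (\<integral>\<^sup>+\<zeta>\<in>UNIV - {\<lambda>_. 0}. Ig ks s \<zeta> \<partial>\<Xi>)"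
  by (simp add: rate_def Ig_def)

lemma xi0: "xi 0 = (\<lambda>_. 0)" by (simp add: xi_def fun_eq_iff)

lemma IA_ind:
  assumes z: "\<zeta> \<in> Delta"
  shows "Ig [3] 1 \<zeta> * indicator (UNIV - {\<lambda>_. 0}) \<zeta> = ennreal (bf \<zeta>) * indicator (UNIV - {\<lambda>_. 0}) \<zeta> + ennreal (cf \<zeta>) * indicator (UNIV - {\<lambda>_. 0}) \<zeta>"
proof (cases "\<zeta> = (\<lambda>_. 0)")
  case True thus ?thesis by simp
next
  case False
  have "Ig [3] 1 \<zeta> = ennreal (bf \<zeta>) + ennreal (cf \<zeta>)" unfolding Ig_def IA_eq[OF z False] ..
  thus ?thesis using False by simp
qed

lemma IB_ind:
  assumes z: "\<zeta> \<in> Delta"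
  shows "Ig [2,2] 0 \<zeta> * indicator (UNIV - {\<lambda>_. 0}) \<zeta> = ennreal (bf \<zeta>) * indicator (UNIV - {\<lambda>_. 0}) \<zeta>"
    "ennreal (bf \<zeta>) * indicator (UNIV - {\<lambda>_. 0}) \<zeta> \<le> 1"
proof -
  show "Ig [2,2] 0 \<zeta> * indicator (UNIV - {\<lambda>_. 0}) \<zeta> = ennreal (bf \<zeta>) * indicator (UNIV - {\<lambda>_. 0}) \<zeta>"
  proof (cases "\<zeta> = (\<lambda>_. 0)")
    case True thus ?thesis by simp
  next
    case False
    have "Ig [2,2] 0 \<zeta> = ennreal (bf \<zeta>)" unfolding Ig_def IB_eq(1)[OF z False] ..
    thus ?thesis using False by simp
  qed
  show "ennreal (bf \<zeta>) * indicator (UNIV - {\<lambda>_. 0}) \<zeta> \<le> 1"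
  proof (cases "\<zeta> = (\<lambda>_. 0)")
    case True thus ?thesis by simp
  next
    case False
    thus ?thesis using IB_eq(2)[OF z False] by simp
  qed
qed

lemma backward:
  assumes sets: "sets \<Xi> = sets borel" and N: "emeasure \<Xi> (UNIV - Delta_sym) = 0"
  shows "symmetric_coalescent \<Xi>"
proof -
  have sp: "space \<Xi> = UNIV" using sets_eq_imp_space_eq[OF sets] by simp
  have Nn: "UNIV - Delta_sym \<in> null_sets \<Xi>"
    using N by (simp add: null_sets_def sets sets.Diff[OF space_in_borel Delta_sym_borel])
  have AE: "AE \<zeta> in \<Xi>. \<zeta> \<in> Delta_sym"
    by (rule AE_I'[OF Nn]) (auto simp: sp)
  show ?thesis unfolding symmetric_coalescent_def
  proof (intro allI impI)
    fix b r :: nat and ks ks' :: "nat list"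
    assume h: "1 < b" "2 \<le> r" "r < b" "length ks = r" "length ks' = r" "\<forall>k\<in>set ks. 0 < k" "\<forall>k\<in>set ks'. 0 < k"
      "sum_list ks = b" "sum_list ks' = b"
    define fk where "fk = filter (\<lambda>k. 2 \<le> k) ks"
    define fk' where "fk' = filter (\<lambda>k. 2 \<le> k) ks'"
    define s where "s = length (filter (\<lambda>k. k = 1) ks)"
    define s' where "s' = length (filter (\<lambda>k. k = 1) ks')"
    have e1: "sum_list fk + s = b" "length fk + s = r"
      using filt_props[OF h(6)] h unfolding fk_def s_def by auto
    have e2: "sum_list fk' + s' = b" "length fk' + s' = r"
      using filt_props[OF h(7)] h unfolding fk'_def s'_def by auto
    have g1: "\<forall>k\<in>set fk. 2 \<le> k" and g2: "\<forall>k\<in>set fk'. 2 \<le> k" unfolding fk_def fk'_def by auto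
    have p1: "\<forall>k\<in>set fk. 0 < k" and p2: "\<forall>k\<in>set fk'. 0 < k" using g1 g2 by auto
    have king: "(fk = [2]) = (fk' = [2])"
      unfolding two_iff[OF g1] two_iff[OF g2] using e1 e2 by linarith
    have int: "(\<integral>\<^sup>+\<zeta>\<in>UNIV - {\<lambda>_. 0}. Ig fk s \<zeta> \<partial>\<Xi>) = (\<integral>\<^sup>+\<zeta>\<in>UNIV - {\<lambda>_. 0}. Ig fk' s' \<zeta> \<partial>\<Xi>)"
    proof (rule nn_integral_cong_AE)
      show "AE \<zeta> in \<Xi>. Ig fk s \<zeta> * indicator (UNIV - {\<lambda>_. 0}) \<zeta> = Ig fk' s' \<zeta> * indicator (UNIV - {\<lambda>_. 0}) \<zeta>"
        using AE
      proof eventually_elim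
        case (elim \<zeta>)
        then obtain k where k: "\<zeta> = xi k" unfolding Delta_sym_def by auto
        show ?case
        proof (cases "k = 0")
          case True thus ?thesis using k xi0 by simp
        next
          case False
          hence "Ig fk s \<zeta> = Ig fk' s' \<zeta>" unfolding k using Ig_xi[OF _ p1, of k s] Ig_xi[OF _ p2, of k s'] e1 e2 by simp
          thus ?thesis by simp
        qed
      qed
    qed
    show "merger_rate \<Xi> ks = merger_rate \<Xi> ks'"
      unfolding merger_rate_def rate_Ig using king int unfolding fk_def fk'_def s_def s'_def by simp
  qed
qed

lemma forward:
  assumes sets: "sets \<Xi> = sets borel" and fin: "finite_measure \<Xi>"
    and ND: "emeasure \<Xi> (UNIV - Delta) = 0" and sym: "symmetric_coalescent \<Xi>"
  shows "emeasure \<Xi> (UNIV - Delta_sym) = 0"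
proof -
  have sp: "space \<Xi> = UNIV" using sets_eq_imp_space_eq[OF sets] by simp
  have mc: "\<And>f. f \<in> borel_measurable borel \<Longrightarrow> f \<in> borel_measurable \<Xi>"
    by (metis measurable_cong_sets sets)
  have Nn: "UNIV - Delta \<in> null_sets \<Xi>"
    using ND by (simp add: null_sets_def sets sets.Diff[OF space_in_borel Delta_borel])
  have AED: "AE \<zeta> in \<Xi>. \<zeta> \<in> Delta"
    by (rule AE_I'[OF Nn]) (auto simp: sp)
  let ?U = "UNIV - {(\<lambda>_. 0) :: nat \<Rightarrow> real}"
  have U: "?U \<in> sets borel" by (intro sets.Diff space_in_borel singleton_borel)
  have "merger_rate \<Xi> [3,1] = merger_rate \<Xi> [2,2]"
    using sym[unfolded symmetric_coalescent_def, rule_format, of 4 2 "[3,1]" "[2,2]"] by force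
  hence eq: "(\<integral>\<^sup>+\<zeta>\<in>?U. Ig [3] 1 \<zeta> \<partial>\<Xi>) = (\<integral>\<^sup>+\<zeta>\<in>?U. Ig [2,2] 0 \<zeta> \<partial>\<Xi>)"
    unfolding merger_rate_def rate_Ig by simp
  have A: "(\<integral>\<^sup>+\<zeta>\<in>?U. Ig [3] 1 \<zeta> \<partial>\<Xi>) = (\<integral>\<^sup>+\<zeta>. ennreal (bf \<zeta>) * indicator ?U \<zeta> + ennreal (cf \<zeta>) * indicator ?U \<zeta> \<partial>\<Xi>)"
  proof (rule nn_integral_cong_AE)
    show "AE x in \<Xi>. Ig [3] 1 x * indicator ?U x = ennreal (bf x) * indicator ?U x + ennreal (cf x) * indicator ?U x"
      using AED by (rule AE_mp) (rule AE_I2, rule impI, erule IA_ind)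
  qed
  also have "\<dots> = (\<integral>\<^sup>+\<zeta>. ennreal (bf \<zeta>) * indicator ?U \<zeta> \<partial>\<Xi>) + (\<integral>\<^sup>+\<zeta>. ennreal (cf \<zeta>) * indicator ?U \<zeta> \<partial>\<Xi>)"
    by (rule nn_integral_add) (auto intro!: mc borel_measurable_times borel_measurable_indicator U
       measurable_compose[OF bf_meas measurable_ennreal] measurable_compose[OF cf_meas measurable_ennreal])
  finally have A': "(\<integral>\<^sup>+\<zeta>\<in>?U. Ig [3] 1 \<zeta> \<partial>\<Xi>) = (\<integral>\<^sup>+\<zeta>. ennreal (bf \<zeta>) * indicator ?U \<zeta> \<partial>\<Xi>) + (\<integral>\<^sup>+\<zeta>. ennreal (cf \<zeta>) * indicator ?U \<zeta> \<partial>\<Xi>)" .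
  have B: "(\<integral>\<^sup>+\<zeta>\<in>?U. Ig [2,2] 0 \<zeta> \<partial>\<Xi>) = (\<integral>\<^sup>+\<zeta>. ennreal (bf \<zeta>) * indicator ?U \<zeta> \<partial>\<Xi>)"
  proof (rule nn_integral_cong_AE)
    show "AE x in \<Xi>. Ig [2,2] 0 x * indicator ?U x = ennreal (bf x) * indicator ?U x"
      using AED by (rule AE_mp) (rule AE_I2, rule impI, erule IB_ind(1))
  qed
  have "(\<integral>\<^sup>+\<zeta>. ennreal (bf \<zeta>) * indicator ?U \<zeta> \<partial>\<Xi>) \<le> (\<integral>\<^sup>+\<zeta>. 1 \<partial>\<Xi>)"
  proof (rule nn_integral_mono_AE)
    show "AE x in \<Xi>. ennreal (bf x) * indicator ?U x \<le> 1"
      using AED by (rule AE_mp) (rule AE_I2, rule impI, erule IB_ind(2))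
  qed
  also have "\<dots> < \<infinity>" using finite_measure.emeasure_finite[OF fin, of "space \<Xi>"]
    by (simp add: less_top)
  finally have fB: "(\<integral>\<^sup>+\<zeta>. ennreal (bf \<zeta>) * indicator ?U \<zeta> \<partial>\<Xi>) \<noteq> \<infinity>" by simp
  have "(\<integral>\<^sup>+\<zeta>. ennreal (bf \<zeta>) * indicator ?U \<zeta> \<partial>\<Xi>) + (\<integral>\<^sup>+\<zeta>. ennreal (cf \<zeta>) * indicator ?U \<zeta> \<partial>\<Xi>)
     = (\<integral>\<^sup>+\<zeta>. ennreal (bf \<zeta>) * indicator ?U \<zeta> \<partial>\<Xi>) + 0"
    using eq A' B by simp
  hence C0: "(\<integral>\<^sup>+\<zeta>. ennreal (cf \<zeta>) * indicator ?U \<zeta> \<partial>\<Xi>) = 0"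
    using fB by (simp only: ennreal_add_left_cancel) simp
  have "AE \<zeta> in \<Xi>. ennreal (cf \<zeta>) * indicator ?U \<zeta> = 0"
    using C0 by (subst (asm) nn_integral_0_iff_AE)
      (auto intro!: mc borel_measurable_times borel_measurable_indicator U
       measurable_compose[OF cf_meas measurable_ennreal])
  hence AEs: "AE \<zeta> in \<Xi>. \<zeta> \<in> Delta_sym" using AED
  proof eventually_elim
    case (elim \<zeta>)
    show ?case
    proof (cases "\<zeta> = (\<lambda>_. 0)")
      case True thus ?thesis using xi0 unfolding Delta_sym_def by (metis rangeI)
    next
      case False
      hence "ennreal (cf \<zeta>) = 0" using elim by (simp add: indicator_def)
      hence "cf \<zeta> \<le> 0" by (rule ennreal_eq_0_iff[THEN iffD1])
      moreover have "0 < mP 2 \<zeta>" using sqnorm_pos[OF elim(2) False] mP_Delta[OF elim(2), of 2] by simp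
      ultimately have "mP 3 \<zeta> - mP 2 \<zeta> * mP 2 \<zeta> \<le> 0" unfolding cf_def
        by (simp add: divide_le_0_iff)
      hence "(\<Sum>i. \<zeta> i ^ 3) \<le> (\<Sum>i. \<zeta> i ^ 2)^2"
        using mP_Delta[OF elim(2), of 2] mP_Delta[OF elim(2), of 3] by (simp add: power2_eq_square)
      thus ?thesis by (rule cs_eq[OF elim(2) False])
    qed
  qed
  have "UNIV - Delta_sym \<in> sets \<Xi>" unfolding sets by (intro sets.Diff space_in_borel Delta_sym_borel)
  moreover have "{x\<in>space \<Xi>. \<not> x \<in> Delta_sym} = UNIV - Delta_sym" using sp by auto
  ultimately show ?thesis using AE_iff_measurable[of "UNIV - Delta_sym" \<Xi> "\<lambda>x. x \<in> Delta_sym"] AEs by simp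
qed


lemma xi_inj: "xi a = xi b \<Longrightarrow> a = b"
proof (rule ccontr)
  assume e: "xi a = xi b" and ne: "a \<noteq> b"
  show False
  proof (cases "a < b")
    case True
    have "xi b a = 1 / real b" using True by (simp add: xi_def)
    moreover have "xi a a = 0" by (simp add: xi_def)
    ultimately show False using e True by simp
  next
    case False
    hence "b < a" using ne by simp
    have "xi a b = 1 / real a" using \<open>b < a\<close> by (simp add: xi_def)
    moreover have "xi b b = 0" by (simp add: xi_def)
    ultimately show False using e \<open>b < a\<close> by simp
  qed
qed

theorem theorem1:
  fixes \<Xi> :: "(nat \<Rightarrow> real) measure"
  assumes "sets \<Xi> = sets borel"
    and "finite_measure \<Xi>"
    and "emeasure \<Xi> (UNIV - Delta) = 0"
  shows "symmetric_coalescent \<Xi> \<longleftrightarrow>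
    (\<exists>F :: nat measure. sets F = sets (count_space UNIV) \<and>
       emeasure F {0} < \<infinity> \<and>
       (\<Sum>k. emeasure F {Suc k} / of_nat (Suc k)) < \<infinity> \<and>
       emeasure \<Xi> (UNIV - Delta_sym) = 0 \<and>
       (\<forall>k. 0 < k \<longrightarrow> emeasure \<Xi> {xi k} = emeasure F {k} / of_nat k) \<and>
       emeasure \<Xi> {xi 0} = emeasure F {0})"
proof
  assume sym: "symmetric_coalescent \<Xi>"
  have N: "emeasure \<Xi> (UNIV - Delta_sym) = 0" by (rule forward[OF assms sym])
  have sp: "space \<Xi> = UNIV" using sets_eq_imp_space_eq[OF assms(1)] by simp
  have fin: "\<And>A. emeasure \<Xi> A \<noteq> \<infinity>" using finite_measure.emeasure_finite[OF assms(2)] by simp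
  have sing: "\<And>k. {xi k} \<in> sets \<Xi>" using assms(1) singleton_borel by simp
  define f where "f k = (if k = 0 then emeasure \<Xi> {xi 0} else of_nat k * emeasure \<Xi> {xi k})" for k
  define F where "F = density (count_space (UNIV :: nat set)) f"
  have sF: "sets F = sets (count_space UNIV)" unfolding F_def by simp
  have eF: "emeasure F {k} = f k" for k
    unfolding F_def by (subst emeasure_density) auto
  have div: "emeasure F {k} / of_nat k = emeasure \<Xi> {xi k}" if "0 < k" for k
  proof -
    have "emeasure F {k} / of_nat k = emeasure \<Xi> {xi k} * of_nat k / of_nat k"
      using that by (simp add: eF f_def mult.commute)
    also have "\<dots> = emeasure \<Xi> {xi k}" using that by (intro ennreal_mult_divide_eq) auto
    finally show ?thesis .
  qed
  have "(\<Sum>k. emeasure F {Suc k} / of_nat (Suc k)) = (\<Sum>k. emeasure \<Xi> {xi (Suc k)})"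
    using div[of "Suc k" for k] by (intro suminf_cong) blast
  also have "\<dots> = emeasure \<Xi> (\<Union>k. {xi (Suc k)})"
    by (rule suminf_emeasure) (auto simp: sing disjoint_family_on_def dest: xi_inj)
  also have "\<dots> < \<infinity>" using fin by (simp add: less_top)
  finally have sumF: "(\<Sum>k. emeasure F {Suc k} / of_nat (Suc k)) < \<infinity>" .
  show "\<exists>F :: nat measure. sets F = sets (count_space UNIV) \<and>
       emeasure F {0} < \<infinity> \<and>
       (\<Sum>k. emeasure F {Suc k} / of_nat (Suc k)) < \<infinity> \<and>
       emeasure \<Xi> (UNIV - Delta_sym) = 0 \<and>
       (\<forall>k. 0 < k \<longrightarrow> emeasure \<Xi> {xi k} = emeasure F {k} / of_nat k) \<and>
       emeasure \<Xi> {xi 0} = emeasure F {0}"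
    using sF sumF N div fin[of "{xi 0}"] by (intro exI[of _ F]) (auto simp: eF f_def less_top)
next
  assume "\<exists>F :: nat measure. sets F = sets (count_space UNIV) \<and>
       emeasure F {0} < \<infinity> \<and>
       (\<Sum>k. emeasure F {Suc k} / of_nat (Suc k)) < \<infinity> \<and>
       emeasure \<Xi> (UNIV - Delta_sym) = 0 \<and>
       (\<forall>k. 0 < k \<longrightarrow> emeasure \<Xi> {xi k} = emeasure F {k} / of_nat k) \<and>
       emeasure \<Xi> {xi 0} = emeasure F {0}"
  hence "emeasure \<Xi> (UNIV - Delta_sym) = 0" by blast
  thus "symmetric_coalescent \<Xi>" by (rule backward[OF assms(1)])
qed

end
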